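(* Let the true margin $\gamma$ of $\mathcal{D}$ satisfy $\gamma>0$. For any finite dataset $R\subseteq\mathrm{supp}(\mathcal{D})$ with empirical margin $\gamma_R\ge\gamma>0$, $$\mathrm{RS}_{\mathrm{SVM}}(R)\le\sqrt{\frac{1}{\gamma^2}-\frac{1}{\gamma_R^2}}.$$
   Context: Let $k$ be a positive semidefinite kernel on $\mathcal{X}$ with RKHS $(\mathcal{H},\langle\cdot,\cdot\rangle_{\mathcal{H}})$ and feature map $\phi$ with $k(x,x')=\langle\phi(x),\phi(x')\rangle_{\mathcal{H}}$. Let $\mathcal{D}$ be a distribution on $\mathcal{X}\times\{-1,+1\}$. The true margin is $\gamma=\sup_{u\in\mathcal{H},\|u\|_{\mathcal{H}}=1}\inf_{(x,y)\in\mathrm{supp}(\mathcal{D})}y\langle u,\phi(x)\rangle_{\mathcal{H}}$, and the empirical margin $\gamma_R$ of a dataset $R=\{(x_i,y_i)\}_{i=1}^n$ is defined with the infimum over $(x_i,y_i)\in R$ instead. The hard-margin kernel SVM solution is $w_R\in\arg\min_{w\in\mathcal{H}}\frac12\|w\|_{\mathcal{H}}^2$ subject to $y_i\langle w,\phi(x_i)\rangle_{\mathcal{H}}\ge1$ for all $i$. The retain sensitivity is $\mathrm{RS}_{\mathrm{SVM}}(R)=\sup_{(x,y)\in\mathrm{supp}(\mathcal{D})}\|w_R-w_{R\cup\{(x,y)\}}\|_{\mathcal{H}}$. *)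

theory Defs
  imports "HOL-Analysis.Analysis"
begin

text \<open>The RKHS is modelled as an abstract real Hilbert space 'h (real inner product space,
complete), the feature map as phi :: 'x => 'h, so that k(x,x') = inner (phi x) (phi x').
The distribution D only enters through its support, modelled as a set S of labelled points.\<close>

text \<open>Margin of a set of labelled points T (infimum taken in the extended reals, so that
an empty infimum is +infinity and an unbounded one is -infinity).\<close>
definition margin :: "('x \<Rightarrow> 'h::real_inner) \<Rightarrow> ('x \<times> real) set \<Rightarrow> ereal" where
  "margin phi T =
     (SUP u\<in>{u::'h. norm u = 1}. INF p\<in>T. ereal (snd p * inner u (phi (fst p))))"

definition svm_solution :: "('x \<Rightarrow> 'h::real_inner) \<Rightarrow> ('x \<times> real) set \<Rightarrow> 'h \<Rightarrow> bool" where
  "svm_solution phi R w \<longleftrightarrow>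
     (\<forall>p\<in>R. snd p * inner w (phi (fst p)) \<ge> 1) \<and>
     (\<forall>v. (\<forall>p\<in>R. snd p * inner v (phi (fst p)) \<ge> 1) \<longrightarrow> (1/2) * (norm w)^2 \<le> (1/2) * (norm v)^2)"

text \<open>Retain sensitivity, given the solution wR for R and a choice W p of solution for R \<union> {p}.\<close>
definition retain_sensitivity :: "('x \<times> real) set \<Rightarrow> 'h::real_normed_vector \<Rightarrow> ('x \<times> real \<Rightarrow> 'h) \<Rightarrow> ereal" where
  "retain_sensitivity S wR W = (SUP p\<in>S. ereal (norm (wR - W p)))"

end

theory Submission
  imports Defs
begin

lemma margin_ge:
  assumes "norm u = 1" "\<forall>p\<in>T. g \<le> snd p * inner u (phi (fst p))"
  shows "ereal g \<le> margin phi T"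
  unfolding margin_def
  by (rule SUP_upper2[where i=u]) (use assms in \<open>auto intro!: INF_greatest\<close>)

lemma margin_gt_ex:
  assumes "ereal g < margin phi T"
  shows "\<exists>u. norm u = 1 \<and> (\<forall>p\<in>T. g \<le> snd p * inner u (phi (fst p)))"
proof -
  from assms obtain u where u: "norm u = 1"
    "ereal g < (INF p\<in>T. ereal (snd p * inner u (phi (fst p))))"
    unfolding margin_def less_SUP_iff by auto
  have "\<forall>p\<in>T. g \<le> snd p * inner u (phi (fst p))"
  proof
    fix p assume "p \<in> T"
    then have "(INF p\<in>T. ereal (snd p * inner u (phi (fst p)))) \<le> ereal (snd p * inner u (phi (fst p)))"
      by (rule INF_lower)
    with u(2) have "ereal g < ereal (snd p * inner u (phi (fst p)))" by (rule less_le_trans)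
    then show "g \<le> snd p * inner u (phi (fst p))" by simp
  qed
  with u(1) show ?thesis by blast
qed

lemma margin_le:
  fixes phi :: "'x \<Rightarrow> 'h::real_inner"
  assumes "p \<in> T" "snd p \<in> {-1, 1}"
  shows "margin phi T \<le> ereal (norm (phi (fst p)))"
  unfolding margin_def
proof (rule SUP_least)
  fix u :: 'h assume "u \<in> {u. norm u = 1}"
  then have nu: "norm u = 1" by simp
  have "(INF p\<in>T. ereal (snd p * inner u (phi (fst p)))) \<le> ereal (snd p * inner u (phi (fst p)))"
    using assms(1) by (rule INF_lower)
  also have "snd p * inner u (phi (fst p)) \<le> norm (phi (fst p))"
  proof -
    have "\<bar>inner u (phi (fst p))\<bar> \<le> norm u * norm (phi (fst p))" by (rule Cauchy_Schwarz_ineq2)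
    with nu assms(2) show ?thesis by auto
  qed
  finally show "(INF p\<in>T. ereal (snd p * inner u (phi (fst p)))) \<le> ereal (norm (phi (fst p)))" by simp
qed

lemma margin_empty_inf:
  fixes phi :: "'x \<Rightarrow> 'h::real_inner"
  shows "margin phi {} = \<infinity> \<or> margin phi {} = -\<infinity>"
proof (cases "{u::'h. norm u = 1} = {}")
  case True then show ?thesis unfolding margin_def True by (simp add: bot_ereal_def)
next
  case False then show ?thesis unfolding margin_def by (simp add: top_ereal_def SUP_const)
qed

lemma variational:
  fixes w w' :: "'h::real_inner"
  assumes feas: "\<And>t. 0 < t \<Longrightarrow> t \<le> 1 \<Longrightarrow> norm w ^ 2 \<le> norm (w + t *\<^sub>R (w' - w)) ^ 2"
  shows "inner w (w' - w) \<ge> 0"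
proof (rule ccontr)
  define d where "d = w' - w"
  define a where "a = inner w d"
  define b where "b = inner d d"
  assume "\<not> inner w (w' - w) \<ge> 0"
  then have a: "a < 0" unfolding a_def d_def by simp
  then have "d \<noteq> 0" unfolding a_def by auto
  then have b: "b > 0" unfolding b_def by simp
  define t where "t = min 1 (- a / b)"
  have t: "0 < t" "t \<le> 1" "t * b \<le> - a" using a b unfolding t_def
    by (auto simp: field_simps min_def)
  have "norm (w + t *\<^sub>R d) ^ 2 = norm w ^ 2 + 2 * t * a + t^2 * b"
    unfolding power2_norm_eq_inner a_def b_def
    by (simp add: inner_add_left inner_add_right inner_commute power2_eq_square algebra_simps)
  with feas[OF t(1,2)] have "0 \<le> 2 * t * a + t^2 * b" unfolding d_def by simp
  then have "0 \<le> t * (2 * a + t * b)" by (simp add: algebra_simps power2_eq_square)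
  then have "0 \<le> 2 * a + t * b" using t(1) by (simp add: zero_le_mult_iff)
  with t(3) a show False by linarith
qed

theorem mainTheorem10:
  fixes phi :: "'x \<Rightarrow> 'h::{real_inner, complete_space}"
    and S R :: "('x \<times> real) set"
    and wR :: 'h and W :: "'x \<times> real \<Rightarrow> 'h"
  assumes labels: "S \<subseteq> UNIV \<times> {-1, 1}"
    and gamma_pos: "margin phi S > 0"
    and R_fin: "finite R" and R_sub: "R \<subseteq> S"
    and R_margin: "margin phi R \<ge> margin phi S"
    and wR_sol: "svm_solution phi R wR"
    and W_sol: "\<forall>p\<in>S. svm_solution phi (insert p R) (W p)"
  shows "retain_sensitivity S wR W \<le>
           ereal (sqrt (1 / (real_of_ereal (margin phi S))^2
                        - 1 / (real_of_ereal (margin phi R))^2))"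
proof (cases "S = {}")
  case True
  then show ?thesis unfolding retain_sensitivity_def by (simp add: bot_ereal_def)
next
  case False
  then obtain p0 where p0: "p0 \<in> S" by blast
  have "snd p0 \<in> {-1, 1}" using labels p0 by auto
  from margin_le[OF p0 this, of phi]
  have "margin phi S \<le> ereal (norm (phi (fst p0)))" .
  with gamma_pos obtain \<gamma> where gS: "margin phi S = ereal \<gamma>" and gpos: "\<gamma> > 0"
    by (cases "margin phi S") auto
  define \<gamma>R where "\<gamma>R = real_of_ereal (margin phi R)"
  have wfeas: "\<forall>p\<in>R. snd p * inner wR (phi (fst p)) \<ge> 1"
    and wopt: "\<And>v. (\<forall>p\<in>R. snd p * inner v (phi (fst p)) \<ge> 1) \<Longrightarrow> norm wR ^ 2 \<le> norm v ^ 2"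
    using wR_sol unfolding svm_solution_def by auto
  have lowR: "1 / \<gamma>R ^ 2 \<le> norm wR ^ 2"
  proof (cases "margin phi R = \<infinity>")
    case True
    then show ?thesis unfolding \<gamma>R_def by simp
  next
    case False
    have "R \<noteq> {}"
    proof
      assume "R = {}"
      with margin_empty_inf[of phi] False R_margin gamma_pos show False by auto
    qed
    then obtain q where q: "q \<in> R" by blast
    from wfeas q have "wR \<noteq> 0" by auto
    then have nw: "norm wR > 0" by simp
    have "ereal (1 / norm wR) \<le> margin phi R"
    proof (rule margin_ge[where u = "wR /\<^sub>R norm wR"])
      show "norm (wR /\<^sub>R norm wR) = 1" using nw by simp
      show "\<forall>p\<in>R. 1 / norm wR \<le> snd p * inner (wR /\<^sub>R norm wR) (phi (fst p))"
        using wfeas nw by (auto simp: divide_simps)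
    qed
    moreover have "margin phi R \<noteq> -\<infinity>" using R_margin gamma_pos by auto
    ultimately have "margin phi R = ereal \<gamma>R" "1 / norm wR \<le> \<gamma>R"
      using False unfolding \<gamma>R_def by (cases "margin phi R"; auto)+
    have gRpos: "\<gamma>R > 0" using nw \<open>1 / norm wR \<le> \<gamma>R\<close>
      by (meson divide_pos_pos less_le_trans zero_less_one)
    have "1 \<le> \<gamma>R * norm wR" using nw \<open>1 / norm wR \<le> \<gamma>R\<close>
      by (simp add: divide_le_eq)
    then have "1 / \<gamma>R \<le> norm wR" using gRpos by (simp add: divide_le_eq mult.commute)
    then have "(1 / \<gamma>R) ^ 2 \<le> norm wR ^ 2" using gRpos by (intro power_mono) auto
    then show ?thesis by (simp add: power_divide)
  qed
  have main: "norm (wR - W p) \<le> sqrt (1 / \<gamma> ^ 2 - 1 / \<gamma>R ^ 2)" if p: "p \<in> S" for p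
  proof -
    define w' where "w' = W p"
    have w'feas: "\<forall>q\<in>insert p R. snd q * inner w' (phi (fst q)) \<ge> 1"
      and w'opt: "\<And>v. (\<forall>q\<in>insert p R. snd q * inner v (phi (fst q)) \<ge> 1) \<Longrightarrow> norm w' ^ 2 \<le> norm v ^ 2"
      using W_sol p unfolding svm_solution_def w'_def by auto
    have upw': "norm w' \<le> 1 / \<gamma>"
    proof (rule ccontr)
      assume "\<not> norm w' \<le> 1 / \<gamma>"
      then have n: "norm w' > 1 / \<gamma>" by simp
      then have npos: "norm w' > 0" using gpos by (meson divide_pos_pos less_trans zero_less_one)
      define g where "g = (1 / norm w' + \<gamma>) / 2"
      have "1 / norm w' < \<gamma>" using n gpos npos by (simp add: field_simps)
      then have g: "0 < g" "g < \<gamma>" "1 / norm w' < g" using npos gpos unfolding g_def by (auto intro: add_pos_pos)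
      then have "ereal g < margin phi S" using gS by simp
      then obtain u where u: "norm u = 1" "\<forall>q\<in>S. g \<le> snd q * inner u (phi (fst q))"
        using margin_gt_ex by blast
      have "\<forall>q\<in>insert p R. snd q * inner (u /\<^sub>R g) (phi (fst q)) \<ge> 1"
        using u(2) p R_sub g(1) by (auto simp: divide_simps)
      from w'opt[OF this] have "norm w' ^ 2 \<le> norm (u /\<^sub>R g) ^ 2" .
      then have "norm w' \<le> norm (u /\<^sub>R g)" by (simp add: power_mono_iff)
      also have "\<dots> = 1 / g" using u(1) g(1) by (simp add: inverse_eq_divide)
      finally have "norm w' \<le> 1 / g" .
      with g(3) npos g(1) show False by (simp add: field_simps)
    qed
    have var: "inner wR (w' - wR) \<ge> 0"
    proof (rule variational)
      fix t :: real assume t: "0 < t" "t \<le> 1"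
      show "norm wR ^ 2 \<le> norm (wR + t *\<^sub>R (w' - wR)) ^ 2"
      proof (rule wopt, intro ballI)
        fix q assume q: "q \<in> R"
        have a: "snd q * inner wR (phi (fst q)) \<ge> 1" using wfeas q by auto
        have b: "snd q * inner w' (phi (fst q)) \<ge> 1" using w'feas q by auto
        have "snd q * inner (wR + t *\<^sub>R (w' - wR)) (phi (fst q))
           = (1 - t) * (snd q * inner wR (phi (fst q))) + t * (snd q * inner w' (phi (fst q)))"
          by (simp add: inner_add_left inner_diff_left algebra_simps)
        also have "\<dots> \<ge> (1 - t) * 1 + t * 1"
          using a b t by (intro add_mono mult_left_mono) auto
        finally show "snd q * inner (wR + t *\<^sub>R (w' - wR)) (phi (fst q)) \<ge> 1" by simp
      qed
    qed
    have eq: "norm (wR - w') ^ 2 = norm w' ^ 2 - norm wR ^ 2 - 2 * inner wR (w' - wR)"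
      unfolding power2_norm_eq_inner
      by (simp add: inner_diff_left inner_diff_right inner_commute algebra_simps)
    have "norm w' ^ 2 \<le> (1 / \<gamma>) ^ 2" using upw' by (simp add: power_mono)
    then have "norm (wR - w') ^ 2 \<le> 1 / \<gamma> ^ 2 - 1 / \<gamma>R ^ 2"
      using eq var lowR by (simp add: power_divide)
    then have "sqrt (norm (wR - w') ^ 2) \<le> sqrt (1 / \<gamma> ^ 2 - 1 / \<gamma>R ^ 2)"
      by (rule real_sqrt_le_mono)
    then show ?thesis unfolding w'_def by simp
  qed
  show ?thesis unfolding retain_sensitivity_def gS \<gamma>R_def[symmetric]
    using main by (auto intro!: SUP_least)
qed

end
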